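(* Let $\Omega\subset\mathbb{R}^N$ be a domain satisfying condition $(\mathrm{L}_r)$ for some $r>0$. Then $\Omega$ satisfies condition $(\mathrm{S}_r)$ (with the same $r$).
   Context: A domain is an open connected set; balls are open Euclidean balls. $C^1$ regularity of $\partial\Omega$: for every $x_0\in\partial\Omega$ there exist $\rho,h>0$, a rigid map $T(x)=Ax+c$ ($A\in SO(N)$) with $T(x_0)=0$, and a $C^1$ function $\phi:\bar B_\rho(0)\subset\mathbb{R}^{N-1}\to(-h,h)$, $\phi(0)=0$, $\nabla\phi(0)=0$, such that for $\mathcal{C}=B_\rho(0)\times(-h,h)$: $\mathcal{C}\cap T(\Omega)=\{(x',x_N)\in\mathcal{C}:x_N<\phi(x')\}$ and $\mathcal{C}\cap T(\partial\Omega)=\{(x',x_N)\in\mathcal{C}:x_N=\phi(x')\}$; then the outward unit normal $\vec n$ is well defined on $\partial\Omega$. Condition $(\mathrm{L}_r)$: $\partial\Omega$ is $C^1$ regular and $|\vec n(x_0)-\vec n(y_0)|\le\frac1r|x_0-y_0|$ for all $x_0,y_0\in\partial\Omega$. Condition $(\mathrm{S}_r)$: for every $x_0\in\partial\Omega$ there exist $a,b\in\mathbb{R}^N$ with $B_r(a)\subset\Omega$, $B_r(b)\subset\mathbb{R}^N\setminus\bar\Omega$ and $|x_0-a|=|x_0-b|=r$. *)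

theory Defs
  imports "HOL-Analysis.Analysis"
begin

text \<open>Euclidean space R^N is rendered as real^n, with 'n a finite linearly ordered
  index type; the "last" coordinate x_N is the coordinate at the maximal index.
  A point x' of R^(N-1) is represented by a vector of real^n whose last coordinate is 0.\<close>

definition lastidx :: "'n::{finite,linorder}" where
  "lastidx = Max UNIV"

definition hproj :: "real^('n::{finite,linorder}) \<Rightarrow> real^('n::{finite,linorder})" where
  "hproj x = (\<chi> i. if i = lastidx then 0 else x $ i)"

definition hdisc :: "real \<Rightarrow> (real^('n::{finite,linorder})) set" where
  "hdisc \<rho> = {y. y $ lastidx = 0 \<and> norm y \<le> \<rho>}"

definition cyl :: "real \<Rightarrow> real \<Rightarrow> (real^('n::{finite,linorder})) set" where
  "cyl \<rho> h = {x. norm (hproj x) < \<rho> \<and> \<bar>x $ lastidx\<bar> < h}"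

definition is_chart ::
  "(real^('n::{finite,linorder})) set \<Rightarrow> real^('n::{finite,linorder}) \<Rightarrow> real \<Rightarrow> real \<Rightarrow> real^('n::{finite,linorder})^('n::{finite,linorder}) \<Rightarrow> real^('n::{finite,linorder})
     \<Rightarrow> (real^('n::{finite,linorder}) \<Rightarrow> real) \<Rightarrow> bool" where
  "is_chart \<Omega> x0 \<rho> h A c \<phi> \<longleftrightarrow>
     \<rho> > 0 \<and> h > 0 \<and> orthogonal_matrix A \<and> det A = 1 \<and> A *v x0 + c = 0 \<and>
     (\<forall>y\<in>hdisc \<rho>. \<bar>\<phi> y\<bar> < h) \<and> \<phi> 0 = 0 \<and>
     (\<exists>\<phi>'. (\<forall>y\<in>hdisc \<rho>. (\<phi> has_derivative \<phi>' y) (at y within hdisc \<rho>)) \<and>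
           (\<forall>v. v $ lastidx = 0 \<longrightarrow> continuous_on (hdisc \<rho>) (\<lambda>y. \<phi>' y v)) \<and>
           (\<forall>v. v $ lastidx = 0 \<longrightarrow> \<phi>' 0 v = 0)) \<and>
     cyl \<rho> h \<inter> (\<lambda>x. A *v x + c) ` \<Omega> = {x \<in> cyl \<rho> h. x $ lastidx < \<phi> (hproj x)} \<and>
     cyl \<rho> h \<inter> (\<lambda>x. A *v x + c) ` frontier \<Omega> = {x \<in> cyl \<rho> h. x $ lastidx = \<phi> (hproj x)}"

definition C1_boundary :: "(real^('n::{finite,linorder})) set \<Rightarrow> bool" where
  "C1_boundary \<Omega> \<longleftrightarrow> (\<forall>x0\<in>frontier \<Omega>. \<exists>\<rho> h A c \<phi>. is_chart \<Omega> x0 \<rho> h A c \<phi>)"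

definition outward_normal :: "(real^('n::{finite,linorder})) set \<Rightarrow> real^('n::{finite,linorder}) \<Rightarrow> real^('n::{finite,linorder})" where
  "outward_normal \<Omega> x0 =
     (SOME \<nu>. \<exists>\<rho> h A c \<phi>. is_chart \<Omega> x0 \<rho> h A c \<phi> \<and> \<nu> = transpose A *v axis lastidx 1)"

definition cond_L :: "real \<Rightarrow> (real^('n::{finite,linorder})) set \<Rightarrow> bool" where
  "cond_L r \<Omega> \<longleftrightarrow> C1_boundary \<Omega> \<and>
     (\<forall>x0\<in>frontier \<Omega>. \<forall>y0\<in>frontier \<Omega>.
        norm (outward_normal \<Omega> x0 - outward_normal \<Omega> y0) \<le> (1 / r) * dist x0 y0)"

definition cond_S :: "real \<Rightarrow> (real^('n::{finite,linorder})) set \<Rightarrow> bool" where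
  "cond_S r \<Omega> \<longleftrightarrow> (\<forall>x0\<in>frontier \<Omega>. \<exists>a b.
     ball a r \<subseteq> \<Omega> \<and> ball b r \<subseteq> - closure \<Omega> \<and> dist x0 a = r \<and> dist x0 b = r)"

end

theory Submission
  imports Defs
begin

abbreviation eN :: "real^('n::{finite,linorder})" where "eN \<equiv> axis lastidx 1"

lemma tr_inner:
  fixes A :: "real^'n^'n"
  shows "(transpose A *v u) \<bullet> v = u \<bullet> (A *v v)"
proof -
  have "transpose A *v u = u v* A" by (rule transpose_matrix_vector)
  then show ?thesis by (simp only: dot_lmul_matrix)
qed

lemma orth_inv1:
  fixes A :: "real^'n^'n"
  assumes "orthogonal_matrix A"
  shows "A *v (transpose A *v u) = u"
proof -
  have "A *v (transpose A *v u) = (A ** transpose A) *v u" by (rule matrix_vector_mul_assoc)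
  also have "A ** transpose A = mat 1" using assms by (simp only: orthogonal_matrix_def)
  finally show ?thesis by (simp only: matrix_vector_mul_lid)
qed

lemma orth_inv2:
  fixes A :: "real^'n^'n"
  assumes "orthogonal_matrix A"
  shows "transpose A *v (A *v u) = u"
proof -
  have "transpose A *v (A *v u) = (transpose A ** A) *v u" by (rule matrix_vector_mul_assoc)
  also have "transpose A ** A = mat 1" using assms by (simp only: orthogonal_matrix_def)
  finally show ?thesis by (simp only: matrix_vector_mul_lid)
qed

lemma orth_inner:
  fixes A :: "real^'n^'n"
  assumes "orthogonal_matrix A"
  shows "(A *v x) \<bullet> (A *v y) = x \<bullet> y"
proof -
  have "(A *v x) \<bullet> (A *v y) = (transpose A *v (A *v x)) \<bullet> y" by (rule tr_inner[symmetric])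
  also have "transpose A *v (A *v x) = x" using assms by (rule orth_inv2)
  finally show ?thesis .
qed

lemma orth_norm:
  fixes A :: "real^'n^'n"
  assumes "orthogonal_matrix A"
  shows "norm (A *v x) = norm x"
  using orth_inner[OF assms, of x x] by (simp add: norm_eq_sqrt_inner)

lemma hproj_decomp: "hproj x + (x $ lastidx) *\<^sub>R eN = x"
  by (simp add: hproj_def vec_eq_iff axis_def)

lemma hproj_last[simp]: "hproj x $ lastidx = 0"
  by (simp add: hproj_def)

lemma hproj_horiz: "y $ lastidx = 0 \<Longrightarrow> hproj y = y"
  by (simp add: hproj_def vec_eq_iff)

lemma hproj_add[simp]: "hproj (x + y) = hproj x + hproj y"
  by (simp add: hproj_def vec_eq_iff)

lemma hproj_scale[simp]: "hproj (a *\<^sub>R x) = a *\<^sub>R hproj x"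
  by (simp add: hproj_def vec_eq_iff)

lemma hproj_axis[simp]: "hproj (eN) = 0"
  by (simp add: hproj_def vec_eq_iff axis_def)

lemma norm_decomp:
  fixes x :: "real^('n::{finite,linorder})"
  shows "(norm x)^2 = (norm (hproj x))^2 + (x $ lastidx)^2"
proof -
  define a where "a = hproj x"
  define b where "b = (x $ lastidx) *\<^sub>R (eN :: real^('n::{finite,linorder}))"
  have ab: "a \<bullet> b = 0" unfolding a_def b_def by (simp add: inner_axis)
  have x: "x = a + b" unfolding a_def b_def by (simp add: hproj_decomp)
  have 1: "(norm x)^2 = (a + b) \<bullet> (a + b)" unfolding x by (rule power2_norm_eq_inner)
  have 2: "(a + b) \<bullet> (a + b) = a \<bullet> a + b \<bullet> b"
    using ab by (simp add: inner_add_left inner_add_right inner_commute)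
  have 3: "a \<bullet> a = (norm (hproj x))^2" unfolding a_def by (simp only: power2_norm_eq_inner)
  have 4: "b \<bullet> b = (x $ lastidx)^2" unfolding b_def by (simp add: inner_axis power2_eq_square)
  show ?thesis using 1 2 3 4 by simp
qed

lemma norm_hproj_le: "norm (hproj x) \<le> norm x"
  using norm_decomp[of x] by (smt (verit) norm_ge_zero power2_le_imp_le zero_le_power2)

lemma abs_last_le: "\<bar>x $ lastidx\<bar> \<le> norm x"
  by (rule component_le_norm_cart)

lemma hproj_alt: "hproj x = x - (x $ lastidx) *\<^sub>R eN"
  using hproj_decomp[of x] by (metis add_diff_cancel_right')

lemma axis_last[simp]: "eN $ lastidx = (1::real)"
  by (simp add: axis_def)

lemma open_cyl: "open (cyl \<rho> h :: (real^('n::{finite,linorder})) set)"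
proof -
  have "cyl \<rho> h = {x::real^('n::{finite,linorder}). norm (x - (x $ lastidx) *\<^sub>R eN) < \<rho>} \<inter> {x. \<bar>x $ lastidx\<bar> < h}"
    by (auto simp: cyl_def hproj_alt)
  also have "open \<dots>"
    by (intro open_Int open_Collect_less continuous_intros)
  finally show ?thesis .
qed

lemma chart_basic:
  assumes "is_chart \<Omega> x0 \<rho> h A c \<phi>"
  shows "\<rho> > 0" "h > 0" "orthogonal_matrix A" "A *v x0 + c = 0"
    "\<And>y. y \<in> hdisc \<rho> \<Longrightarrow> \<bar>\<phi> y\<bar> < h" "\<phi> 0 = 0"
    "cyl \<rho> h \<inter> (\<lambda>x. A *v x + c) ` \<Omega> = {x \<in> cyl \<rho> h. x $ lastidx < \<phi> (hproj x)}"
    "cyl \<rho> h \<inter> (\<lambda>x. A *v x + c) ` frontier \<Omega> = {x \<in> cyl \<rho> h. x $ lastidx = \<phi> (hproj x)}"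
  using assms unfolding is_chart_def by auto

lemma chart_local_core:
  fixes \<Omega> :: "(real^('n::{finite,linorder})) set"
  assumes ch: "is_chart \<Omega> x0 \<rho> h A c \<phi>"
    and der: "(\<phi> has_derivative L) (at z' within hdisc \<rho>)"
    and z': "z' $ lastidx = 0" "norm z' < \<rho>"
    and w: "w $ lastidx = 0"
    and tL: "t \<noteq> L w"
  shows "\<forall>\<^sub>F s in at_right 0.
     z' + \<phi> z' *\<^sub>R eN + s *\<^sub>R (w + t *\<^sub>R eN) \<in> cyl \<rho> h \<and>
     hproj (z' + \<phi> z' *\<^sub>R eN + s *\<^sub>R (w + t *\<^sub>R eN)) = z' + s *\<^sub>R w \<and>
     (z' + \<phi> z' *\<^sub>R eN + s *\<^sub>R (w + t *\<^sub>R eN)) $ lastidx = \<phi> z' + s * t \<and>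
     (t < L w \<longrightarrow> \<phi> (z' + s *\<^sub>R w) > \<phi> z' + s * t) \<and>
     (t > L w \<longrightarrow> \<phi> (z' + s *\<^sub>R w) < \<phi> z' + s * t)"
proof -
  note cb = chart_basic[OF ch]
  define Z where "Z = z' + \<phi> z' *\<^sub>R (eN :: real^('n::{finite,linorder}))"
  define W where "W = w + t *\<^sub>R (eN :: real^('n::{finite,linorder}))"
  have z'd: "z' \<in> hdisc \<rho>" using z' by (simp add: hdisc_def)
  have hZ: "hproj Z = z'" unfolding Z_def using z' by (simp add: hproj_horiz)
  have ZN: "Z $ lastidx = \<phi> z'" unfolding Z_def using z' by simp
  have Zc: "Z \<in> cyl \<rho> h" unfolding cyl_def using hZ ZN z' cb(5)[OF z'd] by simp
  have lim: "((\<lambda>s. Z + s *\<^sub>R W) \<longlongrightarrow> Z) (at_right (0::real))"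
  proof -
    have "((\<lambda>s. Z + s *\<^sub>R W) \<longlongrightarrow> Z + 0 *\<^sub>R W) (at_right (0::real))"
      by (intro tendsto_intros)
    then show ?thesis by simp
  qed
  have E1: "\<forall>\<^sub>F s in at_right 0. Z + s *\<^sub>R W \<in> cyl \<rho> h"
    using topological_tendstoD[OF lim open_cyl Zc] .
  have bl: "bounded_linear L" using der by (rule has_derivative_bounded_linear)
  have Llin: "L (s *\<^sub>R w) = s * L w" for s
    using linear_cmul[OF bounded_linear.linear[OF bl]] by simp
  have np: "norm w + 1 > 0" using norm_ge_zero[of w] by linarith
  define \<epsilon> where "\<epsilon> = \<bar>L w - t\<bar> / (norm w + 1)"
  have \<epsilon>pos: "\<epsilon> > 0" unfolding \<epsilon>_def using tL by (intro divide_pos_pos) (auto simp: np)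
  obtain d where d: "d > 0" and dprop: "\<And>y. y \<in> hdisc \<rho> \<Longrightarrow> norm (y - z') < d \<Longrightarrow>
      norm (\<phi> y - \<phi> z' - L (y - z')) \<le> \<epsilon> * norm (y - z')"
    using der \<epsilon>pos unfolding has_derivative_within_alt by blast
  define b where "b = min (d / (norm w + 1)) ((\<rho> - norm z') / (norm w + 1))"
  have bpos: "b > 0" unfolding b_def using d z' by (simp add: np)
  have E2: "\<forall>\<^sub>F s in at_right 0. s \<in> {0<..<b}" by (rule eventually_at_right_real[OF bpos])
  show ?thesis
    using E1 E2
  proof eventually_elim
    case (elim s)
    then have s: "0 < s" "s < b" by auto
    have nw: "s * norm w < d"
    proof -
      have "s * norm w \<le> s * (norm w + 1)" using s by simp
      also have "\<dots> < b * (norm w + 1)" using s by (simp add: np)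
      also have "\<dots> \<le> d"
      proof -
        have "b \<le> d / (norm w + 1)" unfolding b_def by simp
        then show ?thesis using np by (simp add: pos_le_divide_eq)
      qed
      finally show ?thesis .
    qed
    have nw2: "norm z' + s * norm w < \<rho>"
    proof -
      have "s * norm w \<le> s * (norm w + 1)" using s by simp
      also have "\<dots> < b * (norm w + 1)" using s by (simp add: np)
      also have "\<dots> \<le> \<rho> - norm z'"
      proof -
        have "b \<le> (\<rho> - norm z') / (norm w + 1)" unfolding b_def by simp
        then show ?thesis using np by (simp add: pos_le_divide_eq)
      qed
      finally show ?thesis by simp
    qed
    have yd: "z' + s *\<^sub>R w \<in> hdisc \<rho>"
    proof -
      have "norm (z' + s *\<^sub>R w) \<le> norm z' + s * norm w"
        using norm_triangle_ineq[of z' "s *\<^sub>R w"] s by simp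
      then show ?thesis unfolding hdisc_def using nw2 z' w by simp
    qed
    have "norm (\<phi> (z' + s *\<^sub>R w) - \<phi> z' - L (s *\<^sub>R w)) \<le> \<epsilon> * norm (s *\<^sub>R w)"
      using dprop[OF yd] nw s by simp
    then have est: "\<bar>\<phi> (z' + s *\<^sub>R w) - \<phi> z' - s * L w\<bar> \<le> \<epsilon> * (s * norm w)"
      using s by (simp add: Llin)
    have "\<epsilon> * (s * norm w) < s * \<bar>L w - t\<bar>"
    proof -
      have "\<epsilon> * (s * norm w) = s * (\<bar>L w - t\<bar> * (norm w / (norm w + 1)))"
        unfolding \<epsilon>_def by (simp add: field_simps)
      also have "\<dots> < s * (\<bar>L w - t\<bar> * 1)"
        using s tL by (intro mult_strict_left_mono) (auto simp: np)
      finally show ?thesis by simp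
    qed
    with est have est2: "\<bar>\<phi> (z' + s *\<^sub>R w) - \<phi> z' - s * L w\<bar> < s * \<bar>L w - t\<bar>" by linarith
    have hP: "hproj (Z + s *\<^sub>R W) = z' + s *\<^sub>R w"
      unfolding W_def using hZ w by (simp add: hproj_horiz)
    have PN: "(Z + s *\<^sub>R W) $ lastidx = \<phi> z' + s * t"
      unfolding W_def using ZN w by simp
    have est3: "\<bar>\<phi> (z' + s *\<^sub>R w) - \<phi> z' - s * L w\<bar> < \<bar>s * L w - s * t\<bar>"
      using est2 s by (simp add: right_diff_distrib[symmetric] abs_mult)
    have c1: "t < L w \<longrightarrow> \<phi> (z' + s *\<^sub>R w) > \<phi> z' + s * t"
    proof
      assume "t < L w"
      then have "s * t < s * L w" using s by simp
      then show "\<phi> (z' + s *\<^sub>R w) > \<phi> z' + s * t" using est3 by (simp add: abs_less_iff)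
    qed
    have c2: "t > L w \<longrightarrow> \<phi> (z' + s *\<^sub>R w) < \<phi> z' + s * t"
    proof
      assume "t > L w"
      then have "s * t > s * L w" using s by simp
      then show "\<phi> (z' + s *\<^sub>R w) < \<phi> z' + s * t" using est3 by (simp add: abs_less_iff)
    qed
    show ?case using elim hP PN c1 c2 unfolding Z_def W_def by simp
  qed
qed

definition HS :: "(real^('n::{finite,linorder})) set \<Rightarrow> real^('n::{finite,linorder}) \<Rightarrow> real^('n::{finite,linorder}) \<Rightarrow> bool" where
  "HS \<Omega> z \<nu> \<longleftrightarrow> (\<forall>v. v \<bullet> \<nu> < 0 \<longrightarrow> (\<forall>\<^sub>F s in at_right 0. z + s *\<^sub>R v \<in> \<Omega>)) \<and>
     (\<forall>v. v \<bullet> \<nu> > 0 \<longrightarrow> (\<forall>\<^sub>F s in at_right 0. z + s *\<^sub>R v \<notin> closure \<Omega>))"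

lemma T_mem:
  fixes A :: "real^'n^'n"
  assumes "orthogonal_matrix A"
  shows "(A *v y + c \<in> (\<lambda>x. A *v x + c) ` S) = (y \<in> S)"
proof
  assume "A *v y + c \<in> (\<lambda>x. A *v x + c) ` S"
  then obtain x where x: "x \<in> S" "A *v y + c = A *v x + c" by auto
  then have "A *v y = A *v x" by simp
  then have "transpose A *v (A *v y) = transpose A *v (A *v x)" by simp
  then have "y = x" using orth_inv2[OF assms] by simp
  with x show "y \<in> S" by simp
qed auto

lemma chart_in:
  fixes \<Omega> :: "(real^('n::{finite,linorder})) set"
  assumes ch: "is_chart \<Omega> x0 \<rho> h A c \<phi>"
    and der: "(\<phi> has_derivative L) (at z' within hdisc \<rho>)"
    and z': "z' $ lastidx = 0" "norm z' < \<rho>"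
    and w: "w $ lastidx = 0"
    and tL: "t < L w"
  shows "\<forall>\<^sub>F s in at_right 0. z' + \<phi> z' *\<^sub>R eN + s *\<^sub>R (w + t *\<^sub>R eN) \<in> (\<lambda>x. A *v x + c) ` \<Omega>"

proof -
  have "t \<noteq> L w" using tL by simp
  from chart_local_core[OF ch der z' w this]
  show ?thesis
  proof eventually_elim
    case (elim s)
    let ?P = "z' + \<phi> z' *\<^sub>R eN + s *\<^sub>R (w + t *\<^sub>R eN)"
    have "?P \<in> {x \<in> cyl \<rho> h. x $ lastidx < \<phi> (hproj x)}" using elim tL by simp
    then have "?P \<in> cyl \<rho> h \<inter> (\<lambda>x. A *v x + c) ` \<Omega>" by (simp only: chart_basic(7)[OF ch])
    then show ?case by (rule IntD2)
  qed
qed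

lemma chart_out:
  fixes \<Omega> :: "(real^('n::{finite,linorder})) set"
  assumes ch: "is_chart \<Omega> x0 \<rho> h A c \<phi>"
    and der: "(\<phi> has_derivative L) (at z' within hdisc \<rho>)"
    and z': "z' $ lastidx = 0" "norm z' < \<rho>"
    and w: "w $ lastidx = 0"
    and tL: "t > L w"
  shows "\<forall>\<^sub>F s in at_right 0. z' + \<phi> z' *\<^sub>R eN + s *\<^sub>R (w + t *\<^sub>R eN) \<notin> (\<lambda>x. A *v x + c) ` closure \<Omega>"
proof -
  have "t \<noteq> L w" using tL by simp
  from chart_local_core[OF ch der z' w this]
  show ?thesis
  proof eventually_elim
    case (elim s)
    let ?P = "z' + \<phi> z' *\<^sub>R eN + s *\<^sub>R (w + t *\<^sub>R eN)"
    have P: "?P \<in> cyl \<rho> h" "?P $ lastidx > \<phi> (hproj ?P)" using elim tL by simp_all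
    have "?P \<notin> (\<lambda>x. A *v x + c) ` \<Omega>"
    proof
      assume "?P \<in> (\<lambda>x. A *v x + c) ` \<Omega>"
      then have "?P \<in> cyl \<rho> h \<inter> (\<lambda>x. A *v x + c) ` \<Omega>" using P(1) by (rule IntI[rotated])
      then have "?P \<in> {x \<in> cyl \<rho> h. x $ lastidx < \<phi> (hproj x)}" by (simp only: chart_basic(7)[OF ch])
      then show False using P by simp
    qed
    moreover have "?P \<notin> (\<lambda>x. A *v x + c) ` frontier \<Omega>"
    proof
      assume "?P \<in> (\<lambda>x. A *v x + c) ` frontier \<Omega>"
      then have "?P \<in> cyl \<rho> h \<inter> (\<lambda>x. A *v x + c) ` frontier \<Omega>" using P(1) by (rule IntI[rotated])
      then have "?P \<in> {x \<in> cyl \<rho> h. x $ lastidx = \<phi> (hproj x)}" by (simp only: chart_basic(8)[OF ch])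
      then show False using P by simp
    qed
    ultimately show ?case by (simp add: closure_Un_frontier image_Un)
  qed
qed

lemma chart_der:
  assumes "is_chart \<Omega> x0 \<rho> h A c \<phi>"
  obtains \<phi>' where "\<And>y. y \<in> hdisc \<rho> \<Longrightarrow> (\<phi> has_derivative \<phi>' y) (at y within hdisc \<rho>)"
    "\<And>v. v $ lastidx = 0 \<Longrightarrow> \<phi>' 0 v = 0"
proof -
  have "\<exists>\<phi>'. (\<forall>y\<in>hdisc \<rho>. (\<phi> has_derivative \<phi>' y) (at y within hdisc \<rho>)) \<and>
           (\<forall>v. v $ lastidx = 0 \<longrightarrow> continuous_on (hdisc \<rho>) (\<lambda>y. \<phi>' y v)) \<and>
           (\<forall>v. v $ lastidx = 0 \<longrightarrow> \<phi>' 0 v = 0)"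
    using assms unfolding is_chart_def by (elim conjE) assumption
  then obtain \<phi>' where "\<forall>y\<in>hdisc \<rho>. (\<phi> has_derivative \<phi>' y) (at y within hdisc \<rho>)"
     "\<forall>v. v $ lastidx = 0 \<longrightarrow> \<phi>' 0 v = 0" by blast
  then show ?thesis using that by blast
qed

lemma zero_hdisc: "\<rho> > 0 \<Longrightarrow> 0 \<in> hdisc \<rho>"
  by (simp add: hdisc_def)

lemma chart_HS:
  fixes \<Omega> :: "(real^('n::{finite,linorder})) set"
  assumes ch: "is_chart \<Omega> z \<rho> h A c \<phi>"
  shows "HS \<Omega> z (transpose A *v eN)"
proof -
  note cb = chart_basic[OF ch]
  obtain \<phi>' where der: "\<And>y. y \<in> hdisc \<rho> \<Longrightarrow> (\<phi> has_derivative \<phi>' y) (at y within hdisc \<rho>)"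
    and d0: "\<And>v. v $ lastidx = 0 \<Longrightarrow> \<phi>' 0 v = 0"
    using chart_der[OF ch] by blast
  have der0: "(\<phi> has_derivative \<phi>' 0) (at 0 within hdisc \<rho>)" using der zero_hdisc[OF cb(1)] by blast
  have z0: "(0::real^('n::{finite,linorder})) $ lastidx = 0" "norm (0::real^('n::{finite,linorder})) < \<rho>" using cb(1) by auto
  have key: "A *v (z + s *\<^sub>R v) + c = 0 + \<phi> 0 *\<^sub>R eN + s *\<^sub>R (hproj (A *v v) + ((A *v v) $ lastidx) *\<^sub>R eN)" for s v
  proof -
    have "A *v (z + s *\<^sub>R v) + c = (A *v z + c) + s *\<^sub>R (A *v v)"
      by (simp add: matrix_vector_right_distrib matrix_vector_mult_scaleR algebra_simps)
    also have "\<dots> = s *\<^sub>R (A *v v)" using cb(4) by simp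
    finally show ?thesis using cb(6) by (simp add: hproj_decomp)
  qed
  have inn: "v \<bullet> (transpose A *v eN) = (A *v v) $ lastidx" for v
  proof -
    have "v \<bullet> (transpose A *v eN) = (transpose A *v eN) \<bullet> v" by (rule inner_commute)
    also have "\<dots> = eN \<bullet> (A *v v)" by (rule tr_inner)
    also have "\<dots> = (A *v v) $ lastidx" by (simp add: inner_axis')
    finally show ?thesis .
  qed
  show ?thesis unfolding HS_def
  proof (intro conjI allI impI)
    fix v assume "v \<bullet> (transpose A *v eN) < 0"
    then have t: "(A *v v) $ lastidx < \<phi>' 0 (hproj (A *v v))" using inn d0[of "hproj (A *v v)"] by simp
    from chart_in[OF ch der0 z0 hproj_last t]
    show "\<forall>\<^sub>F s in at_right 0. z + s *\<^sub>R v \<in> \<Omega>"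
      by eventually_elim (simp only: key[symmetric] T_mem[OF cb(3)] not_False_eq_True)
  next
    fix v assume "v \<bullet> (transpose A *v eN) > 0"
    then have t: "(A *v v) $ lastidx > \<phi>' 0 (hproj (A *v v))" using inn d0[of "hproj (A *v v)"] by simp
    from chart_out[OF ch der0 z0 hproj_last t]
    show "\<forall>\<^sub>F s in at_right 0. z + s *\<^sub>R v \<notin> closure \<Omega>"
      by eventually_elim (simp only: key[symmetric] T_mem[OF cb(3)] not_False_eq_True)
  qed
qed

lemma normal_chart:
  assumes "C1_boundary \<Omega>" "z \<in> frontier \<Omega>"
  shows "\<exists>\<rho> h A c \<phi>. is_chart \<Omega> z \<rho> h A c \<phi> \<and> outward_normal \<Omega> z = transpose A *v eN"
proof -
  have "\<exists>\<nu> \<rho> h A c \<phi>. is_chart \<Omega> z \<rho> h A c \<phi> \<and> \<nu> = transpose A *v eN"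
    using assms unfolding C1_boundary_def by blast
  then have "\<exists>\<rho> h A c \<phi>. is_chart \<Omega> z \<rho> h A c \<phi> \<and> (SOME \<nu>. \<exists>\<rho> h A c \<phi>. is_chart \<Omega> z \<rho> h A c \<phi> \<and> \<nu> = transpose A *v eN) = transpose A *v eN"
    by (rule someI_ex[where P = "\<lambda>\<nu>. \<exists>\<rho> h A c \<phi>. is_chart \<Omega> z \<rho> h A c \<phi> \<and> \<nu> = transpose A *v eN"])
  then show ?thesis unfolding outward_normal_def by simp
qed

lemma normal_HS:
  fixes \<Omega> :: "(real^('n::{finite,linorder})) set"
  assumes "C1_boundary \<Omega>" "z \<in> frontier \<Omega>"
  shows "HS \<Omega> z (outward_normal \<Omega> z)" "norm (outward_normal \<Omega> z) = 1"
proof -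
  obtain \<rho> h A c \<phi> where ch: "is_chart \<Omega> z \<rho> h A c \<phi>" and n: "outward_normal \<Omega> z = transpose A *v eN"
    using normal_chart[OF assms] by blast
  show "HS \<Omega> z (outward_normal \<Omega> z)" using chart_HS[OF ch] n by simp
  have "orthogonal_matrix (transpose A)" using chart_basic(3)[OF ch] by simp
  then have "norm (transpose A *v eN) = norm (eN::real^('n::{finite,linorder}))" by (rule orth_norm)
  then have "norm (transpose A *v eN) = 1" by (simp only: norm_axis_1)
  then show "norm (outward_normal \<Omega> z) = 1" using n by (simp only:)
qed

lemma HS_in_contra:
  assumes "HS \<Omega> z \<nu>" "v \<bullet> \<nu> > 0" "\<forall>\<^sub>F s in at_right 0. z + s *\<^sub>R v \<in> \<Omega>"
  shows False
proof -
  have "\<forall>\<^sub>F s in at_right 0. z + s *\<^sub>R v \<notin> closure \<Omega>" using assms(1,2) unfolding HS_def by blast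
  with assms(3) have "\<forall>\<^sub>F s in at_right (0::real). False"
    by eventually_elim (use closure_subset in blast)
  then show False by (simp add: eventually_False)
qed

lemma HS_out_contra:
  assumes "HS \<Omega> z \<nu>" "v \<bullet> \<nu> < 0" "\<forall>\<^sub>F s in at_right 0. z + s *\<^sub>R v \<notin> \<Omega>"
  shows False
proof -
  have "\<forall>\<^sub>F s in at_right 0. z + s *\<^sub>R v \<in> \<Omega>" using assms(1,2) unfolding HS_def by blast
  with assms(3) have "\<forall>\<^sub>F s in at_right (0::real). False"
    by eventually_elim blast
  then show False by (simp add: eventually_False)
qed

lemma ball_eventually:
  fixes z a v :: "'a::real_inner"
  assumes "dist z a = t" "v \<bullet> (a - z) > 0"
  shows "\<forall>\<^sub>F s in at_right 0. z + s *\<^sub>R v \<in> ball a t"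
proof -
  define q where "q = a - z"
  have nq: "norm q = t" using assms(1) unfolding q_def by (simp add: dist_norm norm_minus_commute)
  have vq: "v \<bullet> q > 0" using assms(2) unfolding q_def .
  have np: "(norm v)^2 + 1 > 0" by (simp add: add_nonneg_pos)
  define b where "b = 2 * (v \<bullet> q) / ((norm v)^2 + 1)"
  have bpos: "b > 0" unfolding b_def using vq np by simp
  show ?thesis using eventually_at_right_real[OF bpos]
  proof eventually_elim
    case (elim s)
    then have s: "0 < s" "s < b" by auto
    have "s * (norm v)^2 \<le> s * ((norm v)^2 + 1)" using s by simp
    also have "\<dots> < b * ((norm v)^2 + 1)" using s np by simp
    also have "\<dots> = 2 * (v \<bullet> q)" unfolding b_def using np by simp
    finally have lt: "s * (norm v)^2 < 2 * (v \<bullet> q)" .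
    have "s * (s * (norm v)^2) < s * (2 * (v \<bullet> q))" using lt s by simp
    then have neg: "s^2 * (norm v)^2 - 2 * s * (v \<bullet> q) < 0" by (simp add: power2_eq_square algebra_simps)
    have eq: "(norm (s *\<^sub>R v - q))^2 = s^2 * (norm v)^2 - 2 * s * (v \<bullet> q) + (norm q)^2"
      by (simp only: power2_norm_eq_inner) (simp add: inner_diff_left inner_diff_right inner_commute algebra_simps power2_eq_square)
    have "(norm (s *\<^sub>R v - q))^2 < t^2" using eq neg nq by simp
    then have "norm (s *\<^sub>R v - q) < t" using nq by (auto intro: power_less_imp_less_base)
    moreover have "dist a (z + s *\<^sub>R v) = norm (s *\<^sub>R v - q)"
      unfolding q_def by (simp add: dist_norm algebra_simps norm_minus_commute)
    ultimately show ?case by simp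
  qed
qed

lemma tangent_in:
  fixes \<Omega> :: "(real^('n::{finite,linorder})) set"
  assumes hs: "HS \<Omega> z \<nu>" and n1: "norm \<nu> = 1" and t: "t > 0" and b: "ball a t \<subseteq> \<Omega>" and d: "dist z a = t"
  shows "\<nu> = (1/t) *\<^sub>R (z - a)"
proof -
  define u where "u = (1/t) *\<^sub>R (a - z)"
  have nu: "norm u = 1" unfolding u_def using d t by (simp add: dist_norm norm_minus_commute)
  have nn: "\<nu> \<bullet> \<nu> = 1" using n1 by (simp add: norm_eq_1)
  have uu: "u \<bullet> u = 1" using nu by (simp add: norm_eq_1)
  have kle: "\<bar>u \<bullet> \<nu>\<bar> \<le> 1" using Cauchy_Schwarz_ineq2[of u \<nu>] nu n1 by simp
  have k: "u \<bullet> \<nu> = -1"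
  proof (rule ccontr)
    assume "u \<bullet> \<nu> \<noteq> -1"
    then have kg: "u \<bullet> \<nu> > -1" using kle by linarith
    define v where "v = \<nu> + u"
    have v1: "v \<bullet> \<nu> > 0" unfolding v_def using kg nn by (simp add: inner_add_left)
    have "a - z = t *\<^sub>R u" unfolding u_def using t by simp
    then have "v \<bullet> (a - z) = t * (v \<bullet> u)" by simp
    also have "v \<bullet> u = u \<bullet> \<nu> + 1" unfolding v_def using uu inner_commute[of \<nu> u] by (simp add: inner_add_left)
    finally have "v \<bullet> (a - z) > 0" using kg t by simp
    from ball_eventually[OF d this] have "\<forall>\<^sub>F s in at_right 0. z + s *\<^sub>R v \<in> \<Omega>"
      by eventually_elim (use b in blast)
    with HS_in_contra[OF hs v1] show False by blast
  qed
  have "(norm (\<nu> + u))^2 = \<nu> \<bullet> \<nu> + 2 * (u \<bullet> \<nu>) + u \<bullet> u"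
    by (simp add: power2_norm_eq_inner inner_add_left inner_add_right inner_commute)
  then have "norm (\<nu> + u) = 0" using k nn uu by simp
  then have "\<nu> = - u" by (simp add: add_eq_0_iff)
  then show ?thesis unfolding u_def by (simp add: algebra_simps)
qed

lemma tangent_out:
  fixes \<Omega> :: "(real^('n::{finite,linorder})) set"
  assumes hs: "HS \<Omega> z \<nu>" and n1: "norm \<nu> = 1" and t: "t > 0" and b: "ball a t \<subseteq> - closure \<Omega>" and d: "dist z a = t"
  shows "\<nu> = (1/t) *\<^sub>R (a - z)"
proof -
  define u where "u = (1/t) *\<^sub>R (a - z)"
  have nu: "norm u = 1" unfolding u_def using d t by (simp add: dist_norm norm_minus_commute)
  have nn: "\<nu> \<bullet> \<nu> = 1" using n1 by (simp add: norm_eq_1)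
  have uu: "u \<bullet> u = 1" using nu by (simp add: norm_eq_1)
  have kle: "\<bar>u \<bullet> \<nu>\<bar> \<le> 1" using Cauchy_Schwarz_ineq2[of u \<nu>] nu n1 by simp
  have k: "u \<bullet> \<nu> = 1"
  proof (rule ccontr)
    assume "u \<bullet> \<nu> \<noteq> 1"
    then have kg: "u \<bullet> \<nu> < 1" using kle by linarith
    define v where "v = u - \<nu>"
    have v1: "v \<bullet> \<nu> < 0" unfolding v_def using kg nn by (simp add: inner_diff_left)
    have "a - z = t *\<^sub>R u" unfolding u_def using t by simp
    then have "v \<bullet> (a - z) = t * (v \<bullet> u)" by simp
    also have "v \<bullet> u = 1 - u \<bullet> \<nu>" unfolding v_def using uu inner_commute[of \<nu> u] by (simp add: inner_diff_left)
    finally have "v \<bullet> (a - z) > 0" using kg t by simp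
    from ball_eventually[OF d this] have "\<forall>\<^sub>F s in at_right 0. z + s *\<^sub>R v \<notin> \<Omega>"
      by eventually_elim (use b closure_subset in blast)
    with HS_out_contra[OF hs v1] show False by blast
  qed
  have "(norm (u - \<nu>))^2 = u \<bullet> u - 2 * (u \<bullet> \<nu>) + \<nu> \<bullet> \<nu>"
    by (simp add: power2_norm_eq_inner inner_diff_left inner_diff_right inner_commute)
  then have "norm (u - \<nu>) = 0" using k nn uu by simp
  then have "\<nu> = u" by simp
  then show ?thesis unfolding u_def .
qed

lemma hproj_diff[simp]: "hproj (x - y) = hproj x - hproj y"
  by (simp add: hproj_def vec_eq_iff)

lemma grad_bound:
  fixes \<mu> w :: "real^('n::{finite,linorder})"
  assumes m: "norm (\<mu> - eN) \<le> K" and K: "K < 1" and w: "w $ lastidx = 0"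
  shows "\<mu> $ lastidx > 0" "\<bar>hproj \<mu> \<bullet> w / \<mu> $ lastidx\<bar> \<le> K / (1 - K) * norm w"
proof -
  have "\<bar>(\<mu> - eN) $ lastidx\<bar> \<le> norm (\<mu> - eN)" by (rule component_le_norm_cart)
  then have "\<bar>\<mu> $ lastidx - 1\<bar> \<le> K" using m by simp
  then have mN: "\<mu> $ lastidx \<ge> 1 - K" by linarith
  then show mpos: "\<mu> $ lastidx > 0" using K by linarith
  have "norm (hproj \<mu>) = norm (hproj (\<mu> - eN))" by simp
  also have "\<dots> \<le> norm (\<mu> - eN)" by (rule norm_hproj_le)
  finally have hm: "norm (hproj \<mu>) \<le> K" using m by linarith
  have "\<bar>hproj \<mu> \<bullet> w\<bar> \<le> norm (hproj \<mu>) * norm w" by (rule Cauchy_Schwarz_ineq2)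
  also have "\<dots> \<le> K * norm w" using hm by (simp add: mult_right_mono)
  finally have a: "\<bar>hproj \<mu> \<bullet> w\<bar> \<le> K * norm w" .
  have K0: "0 \<le> K" using m norm_ge_zero[of "\<mu> - eN"] by linarith
  have "\<bar>hproj \<mu> \<bullet> w / \<mu> $ lastidx\<bar> = \<bar>hproj \<mu> \<bullet> w\<bar> / \<mu> $ lastidx" using mpos by simp
  also have "\<dots> \<le> (K * norm w) / (1 - K)"
    by (rule frac_le) (use a K K0 mN in auto)
  finally show "\<bar>hproj \<mu> \<bullet> w / \<mu> $ lastidx\<bar> \<le> K / (1 - K) * norm w" by simp
qed

lemma deriv_formula:
  fixes \<Omega> :: "(real^('n::{finite,linorder})) set"
  assumes ch: "is_chart \<Omega> x0 \<rho> h A c \<phi>"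
    and der: "(\<phi> has_derivative L) (at z' within hdisc \<rho>)"
    and z': "z' $ lastidx = 0" "norm z' < \<rho>"
    and zZ: "A *v z + c = z' + \<phi> z' *\<^sub>R eN"
    and hs: "HS \<Omega> z \<nu>"
    and mN: "(A *v \<nu>) $ lastidx > 0"
    and w: "w $ lastidx = 0"
  shows "L w = - (hproj (A *v \<nu>) \<bullet> w) / (A *v \<nu>) $ lastidx"
proof -
  note cb = chart_basic[OF ch]
  define \<mu> where "\<mu> = A *v \<nu>"
  define t0 where "t0 = - (hproj \<mu> \<bullet> w) / \<mu> $ lastidx"
  have mpos: "\<mu> $ lastidx > 0" using mN unfolding \<mu>_def .
  have Wmu: "(w + t *\<^sub>R eN) \<bullet> \<mu> = \<mu> $ lastidx * (t - t0)" for t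
  proof -
    have wm: "w \<bullet> \<mu> = w \<bullet> hproj \<mu>"
    proof -
      have "w \<bullet> \<mu> = w \<bullet> (hproj \<mu> + (\<mu> $ lastidx) *\<^sub>R eN)" by (simp add: hproj_decomp)
      also have "\<dots> = w \<bullet> hproj \<mu>" using w by (simp add: inner_add_right inner_axis)
      finally show ?thesis .
    qed
    have "(w + t *\<^sub>R eN) \<bullet> \<mu> = w \<bullet> hproj \<mu> + t * \<mu> $ lastidx"
      using wm by (simp add: inner_add_left inner_axis')
    also have "\<dots> = \<mu> $ lastidx * (t - t0)"
      unfolding t0_def using mpos by (simp add: field_simps inner_commute)
    finally show ?thesis .
  qed
  have key: "A *v (z + s *\<^sub>R (transpose A *v W)) + c = z' + \<phi> z' *\<^sub>R eN + s *\<^sub>R W" for s W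
  proof -
    have "A *v (z + s *\<^sub>R (transpose A *v W)) + c = (A *v z + c) + s *\<^sub>R (A *v (transpose A *v W))"
      by (simp add: matrix_vector_right_distrib matrix_vector_mult_scaleR algebra_simps)
    also have "A *v (transpose A *v W) = W" by (rule orth_inv1[OF cb(3)])
    finally show ?thesis using zZ by simp
  qed
  have vnu: "(transpose A *v W) \<bullet> \<nu> = W \<bullet> \<mu>" for W
    unfolding \<mu>_def by (rule tr_inner)
  have up: "L w \<le> t0"
  proof (rule dense_ge)
    fix t assume tt: "t0 < t"
    show "L w \<le> t"
    proof (rule ccontr)
      assume "\<not> L w \<le> t"
      then have "t < L w" by simp
      from chart_in[OF ch der z' w this]
      have ev: "\<forall>\<^sub>F s in at_right 0. z + s *\<^sub>R (transpose A *v (w + t *\<^sub>R eN)) \<in> \<Omega>"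
        by eventually_elim (simp only: key[symmetric] T_mem[OF cb(3)])
      have "(transpose A *v (w + t *\<^sub>R eN)) \<bullet> \<nu> > 0"
        unfolding vnu Wmu using tt mpos by simp
      from HS_in_contra[OF hs this ev] show False .
    qed
  qed
  have lo: "t0 \<le> L w"
  proof (rule dense_le)
    fix t assume tt: "t < t0"
    show "t \<le> L w"
    proof (rule ccontr)
      assume "\<not> t \<le> L w"
      then have "t > L w" by simp
      from chart_out[OF ch der z' w this]
      have ev: "\<forall>\<^sub>F s in at_right 0. z + s *\<^sub>R (transpose A *v (w + t *\<^sub>R eN)) \<notin> \<Omega>"
      proof eventually_elim
        case (elim s)
        then have "z + s *\<^sub>R (transpose A *v (w + t *\<^sub>R eN)) \<notin> closure \<Omega>"
          by (simp only: key[symmetric] T_mem[OF cb(3)] not_False_eq_True)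
        then show ?case using closure_subset by blast
      qed
      have "(transpose A *v (w + t *\<^sub>R eN)) \<bullet> \<nu> < 0"
        unfolding vnu Wmu using tt mpos by (simp add: mult_pos_neg)
      from HS_out_contra[OF hs this ev] show False .
    qed
  qed
  from up lo show ?thesis unfolding t0_def \<mu>_def by simp
qed

lemma phi_small:
  fixes \<phi> :: "real^('n::{finite,linorder}) \<Rightarrow> real"
  assumes der0: "(\<phi> has_derivative L) (at 0 within hdisc \<rho>)"
    and p0: "\<phi> 0 = 0" and d0: "\<forall>v. v $ lastidx = 0 \<longrightarrow> L v = 0" and e: "\<epsilon> > 0"
  shows "\<exists>d>0. \<forall>y. y \<in> hdisc \<rho> \<longrightarrow> norm y < d \<longrightarrow> \<bar>\<phi> y\<bar> \<le> \<epsilon> * norm y"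
proof -
  obtain d where d: "d > 0" and dp: "\<forall>y\<in>(hdisc \<rho> :: (real^('n::{finite,linorder})) set). norm (y - 0) < d \<longrightarrow>
      norm (\<phi> y - \<phi> 0 - L (y - 0)) \<le> \<epsilon> * norm (y - 0)"
    using der0 e unfolding has_derivative_within_alt by blast
  have "\<forall>y::real^('n::{finite,linorder}). y \<in> hdisc \<rho> \<longrightarrow> norm y < d \<longrightarrow> \<bar>\<phi> y\<bar> \<le> \<epsilon> * norm y"
  proof (intro allI impI)
    fix y :: "real^('n::{finite,linorder})" assume y: "y \<in> hdisc \<rho>" "norm y < d"
    then have "L y = 0" using d0 by (simp add: hdisc_def)
    then show "\<bar>\<phi> y\<bar> \<le> \<epsilon> * norm y" using dp y p0 by force
  qed
  with d show ?thesis by blast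
qed

lemma local_grad:
  fixes \<Omega> :: "(real^('n::{finite,linorder})) set"
  assumes C1: "C1_boundary \<Omega>"
    and Lip: "\<forall>x\<in>frontier \<Omega>. \<forall>y\<in>frontier \<Omega>. norm (outward_normal \<Omega> x - outward_normal \<Omega> y) \<le> (1/r) * dist x y"
    and ch: "is_chart \<Omega> x0 \<rho> h A c \<phi>" and x0: "x0 \<in> frontier \<Omega>"
    and n0: "outward_normal \<Omega> x0 = transpose A *v eN"
    and der: "\<forall>y\<in>hdisc \<rho>. (\<phi> has_derivative \<phi>' y) (at y within hdisc \<rho>)"
    and d0: "\<forall>v. v $ lastidx = 0 \<longrightarrow> \<phi>' 0 v = 0"
    and rr: "0 < r'" "r' < r"
  shows "\<exists>\<delta>1>0. \<delta>1 \<le> \<rho> \<and> (\<forall>z' w. z' $ lastidx = 0 \<longrightarrow> norm z' < \<delta>1 \<longrightarrow> w $ lastidx = 0 \<longrightarrow>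
            \<bar>\<phi>' z' w\<bar> \<le> norm z' / r' * norm w)"
proof -
  note cb = chart_basic[OF ch]
  define \<epsilon> where "\<epsilon> = (r - r') / (2 * r')"
  have epos: "\<epsilon> > 0" unfolding \<epsilon>_def using rr by simp
  have e1: "(1 + \<epsilon>) * r' = (r + r') / 2" unfolding \<epsilon>_def using rr by (simp add: field_simps)
  have der0: "(\<phi> has_derivative \<phi>' 0) (at 0 within hdisc \<rho>)" using der zero_hdisc[OF cb(1)] by blast
  obtain d where d: "d > 0" and dp: "\<forall>y. y \<in> hdisc \<rho> \<longrightarrow> norm y < d \<longrightarrow> \<bar>\<phi> y\<bar> \<le> \<epsilon> * norm y"
    using phi_small[OF der0 cb(6) d0 epos] by blast
  define \<delta>1 where "\<delta>1 = min \<rho> (min d ((r - r') / (2 * (1 + \<epsilon>))))"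
  have d1pos: "\<delta>1 > 0" unfolding \<delta>1_def using cb(1) d rr epos by simp
  have d1r: "\<delta>1 \<le> \<rho>" unfolding \<delta>1_def by simp
  have main: "\<bar>\<phi>' z' w\<bar> \<le> norm z' / r' * norm w"
    if z': "z' $ lastidx = 0" "norm z' < \<delta>1" and w: "w $ lastidx = 0" for z' w
  proof -
    have z'r: "norm z' < \<rho>" using z' d1r by linarith
    have z'd: "z' \<in> hdisc \<rho>" using z' z'r by (simp add: hdisc_def)
    have z'd2: "norm z' < d" using z' unfolding \<delta>1_def by simp
    have z'd3: "norm z' < (r - r') / (2 * (1 + \<epsilon>))" using z' unfolding \<delta>1_def by simp
    define Z where "Z = z' + \<phi> z' *\<^sub>R (eN :: real^('n::{finite,linorder}))"
    have hZ: "hproj Z = z'" unfolding Z_def using z' by (simp add: hproj_horiz)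
    have ZN: "Z $ lastidx = \<phi> z'" unfolding Z_def using z' by simp
    have Zc: "Z \<in> cyl \<rho> h" unfolding cyl_def using hZ ZN z'r cb(5)[OF z'd] by simp
    have "Z \<in> {x \<in> cyl \<rho> h. x $ lastidx = \<phi> (hproj x)}" using Zc hZ ZN by simp
    then have "Z \<in> cyl \<rho> h \<inter> (\<lambda>x. A *v x + c) ` frontier \<Omega>" by (simp only: cb(8))
    then obtain z where zf: "z \<in> frontier \<Omega>" and zZ: "A *v z + c = Z" by blast
    define \<nu> where "\<nu> = outward_normal \<Omega> z"
    have hs: "HS \<Omega> z \<nu>" unfolding \<nu>_def by (rule normal_HS(1)[OF C1 zf])
    define \<mu> where "\<mu> = A *v \<nu>"
    have AeN: "A *v (transpose A *v eN) = eN" by (rule orth_inv1[OF cb(3)])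
    have "norm (\<mu> - eN) = norm (A *v (\<nu> - transpose A *v eN))"
      unfolding \<mu>_def by (simp only: matrix_vector_mult_diff_distrib AeN)
    also have "\<dots> = norm (\<nu> - outward_normal \<Omega> x0)" using orth_norm[OF cb(3)] n0 by simp
    also have "\<dots> \<le> (1/r) * dist z x0" unfolding \<nu>_def using Lip zf x0 by blast
    also have "dist z x0 = norm Z"
    proof -
      have "A *v (z - x0) = A *v z + c" using cb(4) by (simp add: matrix_vector_mult_diff_distrib algebra_simps)
      then have "norm (z - x0) = norm (A *v z + c)" using orth_norm[OF cb(3), of "z - x0"] by simp
      then show ?thesis using zZ by (simp add: dist_norm)
    qed
    finally have m1: "norm (\<mu> - eN) \<le> norm Z / r" by simp
    have "norm Z \<le> norm z' + norm (\<phi> z' *\<^sub>R (eN :: real^('n::{finite,linorder})))"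
      unfolding Z_def by (rule norm_triangle_ineq)
    also have "norm (\<phi> z' *\<^sub>R (eN :: real^('n::{finite,linorder}))) = \<bar>\<phi> z'\<bar>" by simp
    also have "\<bar>\<phi> z'\<bar> \<le> \<epsilon> * norm z'" using dp z'd z'd2 by blast
    finally have nZ: "norm Z \<le> (1 + \<epsilon>) * norm z'" by (simp add: algebra_simps)
    define K where "K = (1 + \<epsilon>) * norm z' / r"
    have mK: "norm (\<mu> - eN) \<le> K" unfolding K_def using m1 nZ rr by (simp add: divide_right_mono order_trans)
    have a1: "(1 + \<epsilon>) * norm z' < (r - r') / 2"
      using z'd3 epos by (simp add: field_simps)
    have K1: "K < 1" unfolding K_def using a1 rr by (simp add: field_simps)
    have K0: "K \<ge> 0" unfolding K_def using epos rr by simp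
    note gb = grad_bound[OF mK K1 w]
    have der': "(\<phi> has_derivative \<phi>' z') (at z' within hdisc \<rho>)" using der z'd by blast
    have form: "\<phi>' z' w = - (hproj \<mu> \<bullet> w) / \<mu> $ lastidx"
      unfolding \<mu>_def by (rule deriv_formula[OF ch der' z'(1) z'r zZ[unfolded Z_def] hs gb(1)[unfolded \<mu>_def] w])
    have "\<bar>\<phi>' z' w\<bar> \<le> K / (1 - K) * norm w" using gb(2) form by simp
    also have "K / (1 - K) \<le> norm z' / r'"
    proof -
      have "(1 + \<epsilon>) * (r' + norm z') \<le> r" using e1 a1 by (simp add: algebra_simps)
      then have "(1 + \<epsilon>) * (r' + norm z') * norm z' \<le> r * norm z'" by (simp add: mult_right_mono)
      then have "K * (r' + norm z') \<le> norm z'" unfolding K_def using rr by (simp add: field_simps)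
      then have "K * r' \<le> norm z' * (1 - K)" by (simp add: algebra_simps)
      then show ?thesis using K1 rr by (simp add: field_simps)
    qed
    then have "K / (1 - K) * norm w \<le> norm z' / r' * norm w" by (rule mult_right_mono) simp
    finally show ?thesis .
  qed
  show ?thesis using d1pos d1r main by blast
qed

lemma local_phi:
  fixes \<phi> :: "real^('n::{finite,linorder}) \<Rightarrow> real"
  assumes der: "\<forall>y\<in>hdisc \<rho>. (\<phi> has_derivative \<phi>' y) (at y within hdisc \<rho>)"
    and p0: "\<phi> 0 = 0"
    and gb: "\<forall>z' w. z' $ lastidx = 0 \<longrightarrow> norm z' < \<delta>1 \<longrightarrow> w $ lastidx = 0 \<longrightarrow>
            \<bar>\<phi>' z' w\<bar> \<le> norm z' / r' * norm w"
    and d1: "\<delta>1 \<le> \<rho>" and r': "r' > 0"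
    and y: "y $ lastidx = 0" "norm y < \<delta>1"
  shows "\<bar>\<phi> y\<bar> \<le> (norm y)^2 / (2 * r')"
proof -
  define C where "C = (norm y)^2 / (2 * r')"
  have seg: "s *\<^sub>R y \<in> hdisc \<rho>" if "0 \<le> s" "s \<le> 1" for s
  proof -
    have "norm (s *\<^sub>R y) = s * norm y" using that by simp
    also have "\<dots> \<le> norm y" using that by (simp add: mult_left_le_one_le)
    finally show ?thesis using y d1 unfolding hdisc_def by simp
  qed
  have cont_phi: "continuous_on (hdisc \<rho>) \<phi>"
    using der has_derivative_continuous continuous_on_eq_continuous_within by blast
  have cont: "continuous_on {0..1} (\<lambda>s. \<phi> (s *\<^sub>R y))"
    by (rule continuous_on_compose2[OF cont_phi]) (auto intro!: continuous_intros seg)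
  have D: "((\<lambda>s. \<phi> (s *\<^sub>R y)) has_real_derivative \<phi>' (s *\<^sub>R y) y) (at s)" if s: "0 < s" "s < 1" for s
  proof -
    have d1: "((\<lambda>s. s *\<^sub>R y) has_derivative (\<lambda>d. d *\<^sub>R y)) (at s within {0<..<1})"
      by (rule bounded_linear_imp_has_derivative[OF bounded_linear_scaleR_left])
    have sub: "(\<lambda>s. s *\<^sub>R y) ` {0<..<1} \<subseteq> hdisc \<rho>" using seg by auto
    have dd: "(\<phi> has_derivative \<phi>' (s *\<^sub>R y)) (at (s *\<^sub>R y) within hdisc \<rho>)"
      using der seg s by simp
    have d2: "(\<phi> has_derivative \<phi>' (s *\<^sub>R y)) (at (s *\<^sub>R y) within (\<lambda>s. s *\<^sub>R y) ` {0<..<1})"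
      by (rule has_derivative_subset[OF dd sub])
    have ch: "((\<phi> \<circ> (\<lambda>s. s *\<^sub>R y)) has_derivative (\<phi>' (s *\<^sub>R y) \<circ> (\<lambda>d. d *\<^sub>R y))) (at s within {0<..<1})"
      by (rule diff_chain_within[OF d1 d2])
    have bl: "bounded_linear (\<phi>' (s *\<^sub>R y))" by (rule has_derivative_bounded_linear[OF dd])
    have eq: "(\<phi>' (s *\<^sub>R y) \<circ> (\<lambda>d. d *\<^sub>R y)) = (*) (\<phi>' (s *\<^sub>R y) y)"
    proof
      fix d
      show "(\<phi>' (s *\<^sub>R y) \<circ> (\<lambda>d. d *\<^sub>R y)) d = (*) (\<phi>' (s *\<^sub>R y) y) d"
        using linear_cmul[OF bounded_linear.linear[OF bl], of d y] by simp
    qed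
    have "at s within {0<..<1} = at s" using s by (intro at_within_open) auto
    then show ?thesis using ch eq unfolding has_field_derivative_def o_def by simp
  qed
  have gbs: "\<bar>\<phi>' (s *\<^sub>R y) y\<bar> \<le> 2 * s * C" if s: "0 < s" "s < 1" for s
  proof -
    have "norm (s *\<^sub>R y) = s * norm y" using s by simp
    also have "\<dots> < \<delta>1"
    proof -
      have "s * norm y \<le> norm y" using s by (simp add: mult_left_le_one_le)
      then show ?thesis using y by simp
    qed
    finally have "norm (s *\<^sub>R y) < \<delta>1" .
    moreover have "(s *\<^sub>R y) $ lastidx = 0" using y by simp
    ultimately have "\<bar>\<phi>' (s *\<^sub>R y) y\<bar> \<le> norm (s *\<^sub>R y) / r' * norm y" using gb y(1) by blast
    also have "\<dots> = 2 * s * C" unfolding C_def using s r' by (simp add: power2_eq_square field_simps)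
    finally show ?thesis .
  qed
  have P2: "((\<lambda>s. s^2 * C) has_real_derivative (2 * s * C)) (at s)" for s
    by (auto intro!: derivative_eq_intros)
  have inc: "(\<lambda>s. \<phi> (s *\<^sub>R y) + s^2 * C) 0 \<le> (\<lambda>s. \<phi> (s *\<^sub>R y) + s^2 * C) 1"
  proof (rule DERIV_nonneg_imp_increasing_open[of 0 1])
    fix s :: real assume s: "0 < s" "s < 1"
    have "((\<lambda>s. \<phi> (s *\<^sub>R y) + s^2 * C) has_real_derivative (\<phi>' (s *\<^sub>R y) y + 2 * s * C)) (at s)"
      by (rule DERIV_add[OF D[OF s] P2])
    moreover have "\<phi>' (s *\<^sub>R y) y + 2 * s * C \<ge> 0" using gbs[OF s] by linarith
    ultimately show "\<exists>D. ((\<lambda>s. \<phi> (s *\<^sub>R y) + s^2 * C) has_real_derivative D) (at s) \<and> D \<ge> 0" by blast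
  next
    show "continuous_on {0..1} (\<lambda>s. \<phi> (s *\<^sub>R y) + s^2 * C)"
      by (intro continuous_on_add cont continuous_intros)
  qed simp
  have dec: "(\<lambda>s. \<phi> (s *\<^sub>R y) - s^2 * C) 0 \<ge> (\<lambda>s. \<phi> (s *\<^sub>R y) - s^2 * C) 1"
  proof (rule DERIV_nonpos_imp_decreasing_open[of 0 1])
    fix s :: real assume s: "0 < s" "s < 1"
    have "((\<lambda>s. \<phi> (s *\<^sub>R y) - s^2 * C) has_real_derivative (\<phi>' (s *\<^sub>R y) y - 2 * s * C)) (at s)"
      by (rule DERIV_diff[OF D[OF s] P2])
    moreover have "\<phi>' (s *\<^sub>R y) y - 2 * s * C \<le> 0" using gbs[OF s] by linarith
    ultimately show "\<exists>D. ((\<lambda>s. \<phi> (s *\<^sub>R y) - s^2 * C) has_real_derivative D) (at s) \<and> D \<le> 0" by blast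
  next
    show "continuous_on {0..1} (\<lambda>s. \<phi> (s *\<^sub>R y) - s^2 * C)"
      by (intro continuous_on_diff cont continuous_intros)
  qed simp
  from inc dec p0 show ?thesis unfolding C_def[symmetric] by simp
qed

lemma local_est:
  fixes \<Omega> :: "(real^('n::{finite,linorder})) set"
  assumes C1: "C1_boundary \<Omega>"
    and Lip: "\<forall>x\<in>frontier \<Omega>. \<forall>y\<in>frontier \<Omega>. norm (outward_normal \<Omega> x - outward_normal \<Omega> y) \<le> (1/r) * dist x y"
    and x0: "x0 \<in> frontier \<Omega>"
    and rr: "0 < r'" "r' < r"
  shows "\<exists>\<delta>>0. \<forall>y\<in>frontier \<Omega>. norm (y - x0) < \<delta> \<longrightarrow>
            \<bar>(y - x0) \<bullet> outward_normal \<Omega> x0\<bar> \<le> (norm (y - x0))^2 / (2 * r')"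
proof -
  obtain \<rho> h A c \<phi> where ch: "is_chart \<Omega> x0 \<rho> h A c \<phi>" and n0: "outward_normal \<Omega> x0 = transpose A *v eN"
    using normal_chart[OF C1 x0] by blast
  note cb = chart_basic[OF ch]
  obtain \<phi>' where der1: "\<And>y. y \<in> hdisc \<rho> \<Longrightarrow> (\<phi> has_derivative \<phi>' y) (at y within hdisc \<rho>)"
    and d01: "\<And>v. v $ lastidx = 0 \<Longrightarrow> \<phi>' 0 v = 0"
    using chart_der[OF ch] by blast
  have der: "\<forall>y\<in>hdisc \<rho>. (\<phi> has_derivative \<phi>' y) (at y within hdisc \<rho>)" using der1 by blast
  have d0: "\<forall>v. v $ lastidx = 0 \<longrightarrow> \<phi>' 0 v = 0" using d01 by blast
  obtain \<delta>1 where d1: "\<delta>1 > 0" "\<delta>1 \<le> \<rho>" and gb: "\<forall>z' w. z' $ lastidx = 0 \<longrightarrow> norm z' < \<delta>1 \<longrightarrow> w $ lastidx = 0 \<longrightarrow>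
            \<bar>\<phi>' z' w\<bar> \<le> norm z' / r' * norm w"
    using local_grad[OF C1 Lip ch x0 n0 der d0 rr] by blast
  define \<delta> where "\<delta> = min \<delta>1 h"
  have dpos: "\<delta> > 0" unfolding \<delta>_def using d1 cb(2) by simp
  have "\<forall>y\<in>frontier \<Omega>. norm (y - x0) < \<delta> \<longrightarrow>
            \<bar>(y - x0) \<bullet> outward_normal \<Omega> x0\<bar> \<le> (norm (y - x0))^2 / (2 * r')"
  proof (intro ballI impI)
    fix y assume yf: "y \<in> frontier \<Omega>" and yd: "norm (y - x0) < \<delta>"
    define Y where "Y = A *v y + c"
    have AY: "A *v (y - x0) = Y" unfolding Y_def using cb(4)
      by (simp add: matrix_vector_mult_diff_distrib algebra_simps)
    have nY: "norm Y = norm (y - x0)" using orth_norm[OF cb(3), of "y - x0"] AY by simp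
    have h1: "norm (hproj Y) < \<delta>1" using norm_hproj_le[of Y] nY yd unfolding \<delta>_def by simp
    have h2: "\<bar>Y $ lastidx\<bar> < h" using abs_last_le[of Y] nY yd unfolding \<delta>_def by simp
    have Yc: "Y \<in> cyl \<rho> h" unfolding cyl_def using h1 h2 d1 by simp
    have "Y \<in> cyl \<rho> h \<inter> (\<lambda>x. A *v x + c) ` frontier \<Omega>" using Yc yf unfolding Y_def by blast
    then have "Y \<in> {x \<in> cyl \<rho> h. x $ lastidx = \<phi> (hproj x)}" by (simp only: cb(8))
    then have YN: "Y $ lastidx = \<phi> (hproj Y)" by simp
    have "\<bar>\<phi> (hproj Y)\<bar> \<le> (norm (hproj Y))^2 / (2 * r')"
      by (rule local_phi[OF der cb(6) gb d1(2) rr(1) hproj_last h1])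
    also have "\<dots> \<le> (norm Y)^2 / (2 * r')"
      using norm_hproj_le[of Y] rr by (simp add: divide_right_mono power_mono)
    finally have b: "\<bar>Y $ lastidx\<bar> \<le> (norm (y - x0))^2 / (2 * r')" using YN nY by simp
    have "(y - x0) \<bullet> outward_normal \<Omega> x0 = (transpose A *v eN) \<bullet> (y - x0)" using n0 by (simp add: inner_commute)
    also have "\<dots> = eN \<bullet> (A *v (y - x0))" by (rule tr_inner)
    also have "\<dots> = Y $ lastidx" using AY by (simp add: inner_axis')
    finally show "\<bar>(y - x0) \<bullet> outward_normal \<Omega> x0\<bar> \<le> (norm (y - x0))^2 / (2 * r')" using b by simp
  qed
  with dpos show ?thesis by blast
qed

lemma frontier_closure_sub: "frontier (closure S) \<subseteq> frontier S"
proof -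
  have "closure (- closure S) \<subseteq> closure (- S)" by (rule closure_mono) (use closure_subset in blast)
  then show ?thesis unfolding frontier_closures by auto
qed

lemma sq_dist:
  fixes x0 y m :: "'a::real_inner"
  assumes "norm m = 1"
  shows "(dist (x0 - t *\<^sub>R m) y)^2 = (norm (y - x0))^2 + 2 * t * ((y - x0) \<bullet> m) + t^2"
proof -
  define q where "q = y - x0"
  have mm: "m \<bullet> m = 1" using assms by (simp add: norm_eq_1)
  have "x0 - t *\<^sub>R m - y = - (q + t *\<^sub>R m)" unfolding q_def by (simp add: algebra_simps)
  then have "dist (x0 - t *\<^sub>R m) y = norm (q + t *\<^sub>R m)" by (simp only: dist_norm norm_minus_cancel)
  then have "(dist (x0 - t *\<^sub>R m) y)^2 = (q + t *\<^sub>R m) \<bullet> (q + t *\<^sub>R m)"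
    by (simp only: power2_norm_eq_inner)
  also have "\<dots> = q \<bullet> q + t * (q \<bullet> m) + t * (m \<bullet> q) + t * (t * (m \<bullet> m))"
    by (simp add: inner_add_left inner_add_right algebra_simps)
  also have "m \<bullet> q = q \<bullet> m" by (rule inner_commute)
  also have "q \<bullet> q = (norm q)^2" by (simp only: power2_norm_eq_inner)
  finally show ?thesis unfolding q_def using mm by (simp add: power2_eq_square)
qed

lemma ball_iff:
  fixes x0 y m :: "'a::real_inner"
  assumes "norm m = 1" "t > 0"
  shows "y \<in> ball (x0 - t *\<^sub>R m) t \<longleftrightarrow> (norm (y - x0))^2 + 2 * t * ((y - x0) \<bullet> m) < 0"
proof -
  have "y \<in> ball (x0 - t *\<^sub>R m) t \<longleftrightarrow> dist (x0 - t *\<^sub>R m) y < t" by simp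
  also have "\<dots> \<longleftrightarrow> (dist (x0 - t *\<^sub>R m) y)^2 < t^2"
  proof
    assume "dist (x0 - t *\<^sub>R m) y < t" then show "(dist (x0 - t *\<^sub>R m) y)^2 < t^2"
      by (rule power_strict_mono) auto
  next
    assume H: "(dist (x0 - t *\<^sub>R m) y)^2 < t^2"
    show "dist (x0 - t *\<^sub>R m) y < t"
      by (rule power_less_imp_less_base[OF H]) (use assms(2) in simp)
  qed
  also have "\<dots> \<longleftrightarrow> (norm (y - x0))^2 + 2 * t * ((y - x0) \<bullet> m) < 0" using sq_dist[OF assms(1)] by simp
  finally show ?thesis .
qed

lemma sphere_iff:
  fixes x0 y m :: "'a::real_inner"
  assumes "norm m = 1" "t > 0" "(norm (y - x0))^2 + 2 * t * ((y - x0) \<bullet> m) = 0"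
  shows "dist y (x0 - t *\<^sub>R m) = t"
proof -
  have "(dist (x0 - t *\<^sub>R m) y)^2 = t^2" using sq_dist[OF assms(1)] assms(3) by simp
  then have "dist (x0 - t *\<^sub>R m) y = t" using assms(2) by (simp add: power2_eq_iff_nonneg)
  then show ?thesis by (simp add: dist_commute)
qed

lemma no_boundary_in_ball:
  fixes \<Omega> :: "(real^('n::{finite,linorder})) set"
  assumes Lip: "\<forall>x\<in>frontier \<Omega>. \<forall>y\<in>frontier \<Omega>. norm (outward_normal \<Omega> x - outward_normal \<Omega> y) \<le> (1/r) * dist x y"
    and x0: "x0 \<in> frontier \<Omega>"
    and rr: "0 < r'" "r' < r"
    and m1: "norm m = 1"
    and loc: "\<exists>\<delta>>0. \<forall>y\<in>frontier \<Omega>. norm (y - x0) < \<delta> \<longrightarrow> (norm (y - x0))^2 + 2 * r' * ((y - x0) \<bullet> m) \<ge> 0"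
    and tang: "\<And>t y. 0 < t \<Longrightarrow> t \<le> r' \<Longrightarrow> ball (x0 - t *\<^sub>R m) t \<inter> frontier \<Omega> = {} \<Longrightarrow>
                y \<in> frontier \<Omega> \<Longrightarrow> dist y (x0 - t *\<^sub>R m) = t \<Longrightarrow>
                norm (outward_normal \<Omega> y - outward_normal \<Omega> x0) = norm (y - x0) / t"
  shows "ball (x0 - r' *\<^sub>R m) r' \<inter> frontier \<Omega> = {}"
proof (rule ccontr)
  assume "ball (x0 - r' *\<^sub>R m) r' \<inter> frontier \<Omega> \<noteq> {}"
  then obtain y0 where y0b: "y0 \<in> ball (x0 - r' *\<^sub>R m) r'" and y0f: "y0 \<in> frontier \<Omega>" by blast
  obtain \<delta> where dpos: "\<delta> > 0" and dloc: "\<forall>y\<in>frontier \<Omega>. norm (y - x0) < \<delta> \<longrightarrow> (norm (y - x0))^2 + 2 * r' * ((y - x0) \<bullet> m) \<ge> 0"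
    using loc by blast
  define g where "g y = (norm (y - x0))^2 + 2 * r' * ((y - x0) \<bullet> m)" for y
  define K where "K = frontier \<Omega> \<inter> {y. \<delta> \<le> norm (y - x0)} \<inter> {y. norm (y - x0) \<le> 2 * r'} \<inter> {y. g y \<le> 0}"
  have inK: "y \<in> K" if yf: "y \<in> frontier \<Omega>" and gy: "g y < 0" for y
  proof -
    have "\<delta> \<le> norm (y - x0)" using dloc yf gy unfolding g_def by force
    moreover have "norm (y - x0) \<le> 2 * r'"
    proof -
      have "(y - x0) \<bullet> m \<ge> - norm (y - x0)"
        using Cauchy_Schwarz_ineq2[of "y - x0" m] m1 by (simp add: abs_le_iff)
      then have "2 * r' * (- norm (y - x0)) \<le> 2 * r' * ((y - x0) \<bullet> m)" using rr
        by (intro mult_left_mono) auto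
      then have "(norm (y - x0))^2 < 2 * r' * norm (y - x0)" using gy unfolding g_def by linarith
      then show ?thesis by (simp add: power2_eq_square mult_less_cancel_right)
    qed
    ultimately show ?thesis unfolding K_def using yf gy by simp
  qed
  have y0K: "y0 \<in> K" using inK[OF y0f] y0b ball_iff[OF m1 rr(1)] unfolding g_def by blast
  have Kneg: "(y - x0) \<bullet> m < 0" if "y \<in> K" for y
  proof -
    have "\<delta> \<le> norm (y - x0)" "g y \<le> 0" using that unfolding K_def by auto
    then have "norm (y - x0) > 0" using dpos by linarith
    then have "(norm (y - x0))^2 > 0" by simp
    then have "2 * r' * ((y - x0) \<bullet> m) < 0" using \<open>g y \<le> 0\<close> unfolding g_def by linarith
    then show ?thesis using rr by (simp add: mult_less_0_iff)
  qed
  have c1: "continuous_on UNIV (\<lambda>y. norm (y - x0))" by (intro continuous_on_norm continuous_on_diff continuous_on_id continuous_on_const)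
  have c2: "continuous_on UNIV (\<lambda>y. (y - x0) \<bullet> m)" by (intro continuous_on_inner continuous_on_diff continuous_on_id continuous_on_const)
  have c3: "continuous_on UNIV g" unfolding g_def
    by (intro continuous_on_add continuous_on_power continuous_on_mult c1 c2 continuous_on_const)
  have cK: "compact K"
    unfolding compact_eq_bounded_closed
  proof
    have "K \<subseteq> cball x0 (2 * r')" unfolding K_def by (auto simp: dist_norm norm_minus_commute)
    then show "bounded K" using bounded_cball bounded_subset by blast
    have "closed {y. \<delta> \<le> norm (y - x0)}" by (rule closed_Collect_le[OF continuous_on_const c1])
    moreover have "closed {y. norm (y - x0) \<le> 2 * r'}" by (rule closed_Collect_le[OF c1 continuous_on_const])
    moreover have "closed {y. g y \<le> 0}" by (rule closed_Collect_le[OF c3 continuous_on_const])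
    ultimately show "closed K" unfolding K_def by (intro closed_Int frontier_closed)
  qed
  define f where "f y = (norm (y - x0))^2 / (- ((y - x0) \<bullet> m))" for y
  have fcont: "continuous_on K f" unfolding f_def
  proof (rule continuous_on_divide)
    show "continuous_on K (\<lambda>y. (norm (y - x0))^2)"
      by (rule continuous_on_power[OF continuous_on_subset[OF c1]]) simp
    show "continuous_on K (\<lambda>y. - ((y - x0) \<bullet> m))"
      by (rule continuous_on_minus[OF continuous_on_subset[OF c2]]) simp
    show "\<forall>y\<in>K. - ((y - x0) \<bullet> m) \<noteq> 0" using Kneg by force
  qed
  obtain ys where ysK: "ys \<in> K" and ysmin: "\<forall>y\<in>K. f ys \<le> f y"
    using continuous_attains_inf[OF cK _ fcont] y0K by blast
  define ts where "ts = f ys / 2"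
  have ysf: "ys \<in> frontier \<Omega>" and ysd: "\<delta> \<le> norm (ys - x0)" and gys: "g ys \<le> 0" using ysK unfolding K_def by auto
  have nys: "(ys - x0) \<bullet> m < 0" using Kneg[OF ysK] .
  have tspos: "ts > 0"
  proof -
    have "norm (ys - x0) > 0" using ysd dpos by linarith
    then have "(norm (ys - x0))^2 > 0" by simp
    moreover have "- ((ys - x0) \<bullet> m) > 0" using nys by simp
    ultimately have "f ys > 0" unfolding f_def by (rule divide_pos_pos)
    then show ?thesis unfolding ts_def by simp
  qed
  have tsr: "ts \<le> r'"
  proof -
    have "(norm (ys - x0))^2 \<le> 2 * r' * (- ((ys - x0) \<bullet> m))" using gys unfolding g_def by simp
    moreover have pos: "- ((ys - x0) \<bullet> m) > 0" using nys by simp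
    ultimately have "f ys \<le> 2 * r'" unfolding f_def by (subst pos_divide_le_eq[OF pos]) (simp add: algebra_simps)
    then show ?thesis unfolding ts_def by simp
  qed
  have sph: "(norm (ys - x0))^2 + 2 * ts * ((ys - x0) \<bullet> m) = 0"
    unfolding ts_def f_def using nys by (simp add: field_simps)
  have free: "ball (x0 - ts *\<^sub>R m) ts \<inter> frontier \<Omega> = {}"
  proof (rule ccontr)
    assume "ball (x0 - ts *\<^sub>R m) ts \<inter> frontier \<Omega> \<noteq> {}"
    then obtain y where yb: "y \<in> ball (x0 - ts *\<^sub>R m) ts" and yf: "y \<in> frontier \<Omega>" by blast
    have lt: "(norm (y - x0))^2 + 2 * ts * ((y - x0) \<bullet> m) < 0" using yb ball_iff[OF m1 tspos] by blast
    then have "2 * ts * ((y - x0) \<bullet> m) < 0" using zero_le_power2[of "norm (y - x0)"] by linarith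
    then have yneg: "(y - x0) \<bullet> m < 0" using tspos by (simp add: mult_less_0_iff)
    have "2 * r' * ((y - x0) \<bullet> m) \<le> 2 * ts * ((y - x0) \<bullet> m)" using tsr yneg
      by (simp add: mult_right_mono_neg)
    then have "g y < 0" unfolding g_def using lt by linarith
    then have yK: "y \<in> K" using inK yf by blast
    have "f y < 2 * ts"
    proof -
      have "(norm (y - x0))^2 < 2 * ts * (- ((y - x0) \<bullet> m))" using lt by simp
      moreover have pos: "- ((y - x0) \<bullet> m) > 0" using yneg by simp
      ultimately show ?thesis unfolding f_def by (subst pos_divide_less_eq[OF pos]) (simp add: algebra_simps)
    qed
    moreover have "f ys \<le> f y" using ysmin yK by blast
    ultimately show False unfolding ts_def by simp
  qed
  have dys: "dist ys (x0 - ts *\<^sub>R m) = ts" by (rule sphere_iff[OF m1 tspos sph])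
  have eq: "norm (outward_normal \<Omega> ys - outward_normal \<Omega> x0) = norm (ys - x0) / ts"
    by (rule tang[OF tspos tsr free ysf dys])
  have le: "norm (outward_normal \<Omega> ys - outward_normal \<Omega> x0) \<le> norm (ys - x0) / r"
    using Lip ysf x0 by (simp add: dist_norm)
  have npos: "norm (ys - x0) > 0" using ysd dpos by linarith
  have "norm (ys - x0) / r < norm (ys - x0) / ts"
    using npos tspos tsr rr by (intro divide_strict_left_mono) auto
  with eq le show False by linarith
qed

lemma ball_union:
  fixes x0 m :: "'a::real_inner"
  assumes m1: "norm m = 1" and r: "r > 0"
    and sub: "\<And>r'. 0 < r' \<Longrightarrow> r' < r \<Longrightarrow> ball (x0 - r' *\<^sub>R m) r' \<subseteq> S"
  shows "ball (x0 - r *\<^sub>R m) r \<subseteq> S"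
proof
  fix p assume p: "p \<in> ball (x0 - r *\<^sub>R m) r"
  define q where "q = p - x0"
  have lt: "(norm q)^2 + 2 * r * (q \<bullet> m) < 0" using p ball_iff[OF m1 r] unfolding q_def by blast
  then have "2 * r * (q \<bullet> m) < 0" using zero_le_power2[of "norm q"] by linarith
  then have qm: "q \<bullet> m < 0" using r by (simp add: mult_less_0_iff)
  define D where "D = - 2 * (q \<bullet> m)"
  have Dpos: "D > 0" unfolding D_def using qm by simp
  define r0 where "r0 = (norm q)^2 / D"
  have r0nn: "r0 \<ge> 0" unfolding r0_def using Dpos by simp
  have r0r: "r0 < r"
  proof -
    have "(norm q)^2 < r * D" unfolding D_def using lt by simp
    then show ?thesis unfolding r0_def using Dpos by (simp add: pos_divide_less_eq)
  qed
  define r' where "r' = (r0 + r) / 2"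
  have r'pos: "r' > 0" unfolding r'_def using r0nn r by simp
  have r'r: "r' < r" unfolding r'_def using r0r by simp
  have "r0 < r'" unfolding r'_def using r0r by simp
  then have "(norm q)^2 < r' * D" unfolding r0_def using Dpos by (simp add: pos_divide_less_eq)
  then have "(norm q)^2 + 2 * r' * (q \<bullet> m) < 0" unfolding D_def by simp
  then have "p \<in> ball (x0 - r' *\<^sub>R m) r'" using ball_iff[OF m1 r'pos] unfolding q_def by blast
  then show "p \<in> S" using sub[OF r'pos r'r] by blast
qed

lemma in_ball_sub:
  fixes \<Omega> :: "(real^('n::{finite,linorder})) set"
  assumes hs: "HS \<Omega> x0 n" and n1: "norm n = 1" and t: "t > 0"
    and free: "ball (x0 - t *\<^sub>R n) t \<inter> frontier \<Omega> = {}"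
  shows "ball (x0 - t *\<^sub>R n) t \<subseteq> \<Omega>"
proof (rule ccontr)
  assume nsub: "\<not> ball (x0 - t *\<^sub>R n) t \<subseteq> \<Omega>"
  have nn: "n \<bullet> n = 1" using n1 by (simp add: norm_eq_1)
  have "(- n) \<bullet> n < 0" using nn by simp
  then have e1: "\<forall>\<^sub>F s in at_right 0. x0 + s *\<^sub>R (- n) \<in> \<Omega>"
    using hs unfolding HS_def by blast
  have d: "dist x0 (x0 - t *\<^sub>R n) = t" using t n1 by (simp add: dist_norm)
  have "(- n) \<bullet> ((x0 - t *\<^sub>R n) - x0) > 0" using t nn by simp
  from ball_eventually[OF d this]
  have e2: "\<forall>\<^sub>F s in at_right 0. x0 + s *\<^sub>R (- n) \<in> ball (x0 - t *\<^sub>R n) t" .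
  have "\<exists>s. x0 + s *\<^sub>R (- n) \<in> \<Omega> \<and> x0 + s *\<^sub>R (- n) \<in> ball (x0 - t *\<^sub>R n) t"
    by (rule eventually_happens'[OF _ eventually_conj[OF e1 e2]]) simp
  then have "ball (x0 - t *\<^sub>R n) t \<inter> \<Omega> \<noteq> {}" by blast
  moreover have "ball (x0 - t *\<^sub>R n) t - \<Omega> \<noteq> {}" using nsub by blast
  ultimately have "ball (x0 - t *\<^sub>R n) t \<inter> frontier \<Omega> \<noteq> {}"
    by (rule connected_Int_frontier[OF connected_ball])
  with free show False by simp
qed

lemma out_ball_sub:
  fixes \<Omega> :: "(real^('n::{finite,linorder})) set"
  assumes hs: "HS \<Omega> x0 n" and n1: "norm n = 1" and t: "t > 0"
    and free: "ball (x0 - t *\<^sub>R (- n)) t \<inter> frontier \<Omega> = {}"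
  shows "ball (x0 - t *\<^sub>R (- n)) t \<subseteq> - closure \<Omega>"
proof (rule ccontr)
  let ?B = "ball (x0 - t *\<^sub>R (- n)) t"
  assume nsub: "\<not> ?B \<subseteq> - closure \<Omega>"
  have nn: "n \<bullet> n = 1" using n1 by (simp add: norm_eq_1)
  have "n \<bullet> n > 0" using nn by simp
  then have e1: "\<forall>\<^sub>F s in at_right 0. x0 + s *\<^sub>R n \<notin> closure \<Omega>"
    using hs unfolding HS_def by blast
  have d: "dist x0 (x0 - t *\<^sub>R (- n)) = t" using t n1 by (simp add: dist_norm)
  have "n \<bullet> ((x0 - t *\<^sub>R (- n)) - x0) > 0" using t nn by simp
  from ball_eventually[OF d this]
  have e2: "\<forall>\<^sub>F s in at_right 0. x0 + s *\<^sub>R n \<in> ?B" .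
  have "\<exists>s. x0 + s *\<^sub>R n \<notin> closure \<Omega> \<and> x0 + s *\<^sub>R n \<in> ?B"
    by (rule eventually_happens'[OF _ eventually_conj[OF e1 e2]]) simp
  then have "?B \<inter> (- closure \<Omega>) \<noteq> {}" by blast
  moreover have "?B - (- closure \<Omega>) \<noteq> {}" using nsub by blast
  ultimately have "?B \<inter> frontier (- closure \<Omega>) \<noteq> {}"
    by (rule connected_Int_frontier[OF connected_ball])
  moreover have "frontier (- closure \<Omega>) \<subseteq> frontier \<Omega>"
    using frontier_closure_sub[of \<Omega>] by simp
  ultimately show False using free by blast
qed

theorem lemma4p3:
  fixes \<Omega> :: "(real^('n::{finite,linorder})) set" and r :: real
  assumes "open \<Omega>" and "connected \<Omega>" and "r > 0" and "cond_L r \<Omega>"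
  shows "cond_S r \<Omega>"
  unfolding cond_S_def
proof
  fix x0 assume x0: "x0 \<in> frontier \<Omega>"
  have r: "r > 0" by fact
  have C1: "C1_boundary \<Omega>" and Lip: "\<forall>x\<in>frontier \<Omega>. \<forall>y\<in>frontier \<Omega>.
      norm (outward_normal \<Omega> x - outward_normal \<Omega> y) \<le> (1/r) * dist x y"
    using assms(4) unfolding cond_L_def by auto
  define n where "n = outward_normal \<Omega> x0"
  have hs0: "HS \<Omega> x0 n" and n1: "norm n = 1" unfolding n_def using normal_HS[OF C1 x0] by auto
  have mn1: "norm (- n) = 1" using n1 by simp
  have nn: "n \<bullet> n = 1" using n1 by (simp add: norm_eq_1)
  have loc_both: "\<exists>\<delta>>0. \<forall>y\<in>frontier \<Omega>. norm (y - x0) < \<delta> \<longrightarrow>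
       \<bar>(y - x0) \<bullet> n\<bar> \<le> (norm (y - x0))^2 / (2 * r')" if "0 < r'" "r' < r" for r'
    unfolding n_def by (rule local_est[OF C1 Lip x0 that])
  have inner: "ball (x0 - r' *\<^sub>R n) r' \<subseteq> \<Omega>" if rr: "0 < r'" "r' < r" for r'
  proof -
    have loc: "\<exists>\<delta>>0. \<forall>y\<in>frontier \<Omega>. norm (y - x0) < \<delta> \<longrightarrow> (norm (y - x0))^2 + 2 * r' * ((y - x0) \<bullet> n) \<ge> 0"
    proof -
      obtain \<delta> where "\<delta> > 0" and dl: "\<forall>y\<in>frontier \<Omega>. norm (y - x0) < \<delta> \<longrightarrow>
          \<bar>(y - x0) \<bullet> n\<bar> \<le> (norm (y - x0))^2 / (2 * r')" using loc_both[OF rr] by blast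
      have "(norm (y - x0))^2 + 2 * r' * ((y - x0) \<bullet> n) \<ge> 0" if "y \<in> frontier \<Omega>" "norm (y - x0) < \<delta>" for y
      proof -
        have "\<bar>(y - x0) \<bullet> n\<bar> \<le> (norm (y - x0))^2 / (2 * r')" using dl that by blast
        then have "2 * r' * \<bar>(y - x0) \<bullet> n\<bar> \<le> (norm (y - x0))^2" using rr by (simp add: field_simps)
        moreover have "2 * r' * (- ((y - x0) \<bullet> n)) \<le> 2 * r' * \<bar>(y - x0) \<bullet> n\<bar>" using rr
          by (intro mult_left_mono) auto
        ultimately show ?thesis by linarith
      qed
      with \<open>\<delta> > 0\<close> show ?thesis by blast
    qed
    have tang: "norm (outward_normal \<Omega> y - outward_normal \<Omega> x0) = norm (y - x0) / t"
      if t: "0 < t" "t \<le> r'" and free: "ball (x0 - t *\<^sub>R n) t \<inter> frontier \<Omega> = {}"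
        and yf: "y \<in> frontier \<Omega>" and dy: "dist y (x0 - t *\<^sub>R n) = t" for t y
    proof -
      have sub: "ball (x0 - t *\<^sub>R n) t \<subseteq> \<Omega>" by (rule in_ball_sub[OF hs0 n1 t(1) free])
      have ny: "outward_normal \<Omega> y = (1/t) *\<^sub>R (y - (x0 - t *\<^sub>R n))"
        by (rule tangent_in[OF normal_HS(1)[OF C1 yf] normal_HS(2)[OF C1 yf] t(1) sub dy])
      have "outward_normal \<Omega> y - outward_normal \<Omega> x0 = (1/t) *\<^sub>R (y - x0)"
        unfolding ny n_def[symmetric] using t by (simp add: algebra_simps)
      then show ?thesis using t by simp
    qed
    have "ball (x0 - r' *\<^sub>R n) r' \<inter> frontier \<Omega> = {}"
      by (rule no_boundary_in_ball[OF Lip x0 rr n1 loc tang]) (auto simp: n_def)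
    then show ?thesis by (rule in_ball_sub[OF hs0 n1 rr(1)])
  qed
  have outer: "ball (x0 - r' *\<^sub>R (- n)) r' \<subseteq> - closure \<Omega>" if rr: "0 < r'" "r' < r" for r'
  proof -
    have loc: "\<exists>\<delta>>0. \<forall>y\<in>frontier \<Omega>. norm (y - x0) < \<delta> \<longrightarrow> (norm (y - x0))^2 + 2 * r' * ((y - x0) \<bullet> (- n)) \<ge> 0"
    proof -
      obtain \<delta> where "\<delta> > 0" and dl: "\<forall>y\<in>frontier \<Omega>. norm (y - x0) < \<delta> \<longrightarrow>
          \<bar>(y - x0) \<bullet> n\<bar> \<le> (norm (y - x0))^2 / (2 * r')" using loc_both[OF rr] by blast
      have "(norm (y - x0))^2 + 2 * r' * ((y - x0) \<bullet> (- n)) \<ge> 0" if "y \<in> frontier \<Omega>" "norm (y - x0) < \<delta>" for y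
      proof -
        have "\<bar>(y - x0) \<bullet> n\<bar> \<le> (norm (y - x0))^2 / (2 * r')" using dl that by blast
        then have "2 * r' * \<bar>(y - x0) \<bullet> n\<bar> \<le> (norm (y - x0))^2" using rr by (simp add: field_simps)
        moreover have "2 * r' * ((y - x0) \<bullet> n) \<le> 2 * r' * \<bar>(y - x0) \<bullet> n\<bar>" using rr
          by (intro mult_left_mono) auto
        ultimately show ?thesis by simp
      qed
      with \<open>\<delta> > 0\<close> show ?thesis by blast
    qed
    have tang: "norm (outward_normal \<Omega> y - outward_normal \<Omega> x0) = norm (y - x0) / t"
      if t: "0 < t" "t \<le> r'" and free: "ball (x0 - t *\<^sub>R (- n)) t \<inter> frontier \<Omega> = {}"
        and yf: "y \<in> frontier \<Omega>" and dy: "dist y (x0 - t *\<^sub>R (- n)) = t" for t y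
    proof -
      have sub: "ball (x0 - t *\<^sub>R (- n)) t \<subseteq> - closure \<Omega>" by (rule out_ball_sub[OF hs0 n1 t(1) free])
      have ny: "outward_normal \<Omega> y = (1/t) *\<^sub>R ((x0 - t *\<^sub>R (- n)) - y)"
        by (rule tangent_out[OF normal_HS(1)[OF C1 yf] normal_HS(2)[OF C1 yf] t(1) sub dy])
      have "outward_normal \<Omega> y - outward_normal \<Omega> x0 = (1/t) *\<^sub>R (x0 - y)"
        unfolding ny n_def[symmetric] using t by (simp add: algebra_simps)
      then show ?thesis using t by (simp add: norm_minus_commute)
    qed
    have "ball (x0 - r' *\<^sub>R (- n)) r' \<inter> frontier \<Omega> = {}"
      by (rule no_boundary_in_ball[OF Lip x0 rr mn1 loc tang]) (auto simp: n_def)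
    then show ?thesis by (rule out_ball_sub[OF hs0 n1 rr(1)])
  qed
  have A: "ball (x0 - r *\<^sub>R n) r \<subseteq> \<Omega>" by (rule ball_union[OF n1 r inner])
  have B: "ball (x0 - r *\<^sub>R (- n)) r \<subseteq> - closure \<Omega>" by (rule ball_union[OF mn1 r outer])
  have dA: "dist x0 (x0 - r *\<^sub>R n) = r" using n1 r by (simp add: dist_norm)
  have dB: "dist x0 (x0 - r *\<^sub>R (- n)) = r" using n1 r by (simp add: dist_norm)
  show "\<exists>a b. ball a r \<subseteq> \<Omega> \<and> ball b r \<subseteq> - closure \<Omega> \<and> dist x0 a = r \<and> dist x0 b = r"
    using A B dA dB by blast
qed

end
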